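(* For every positive integer $g$, there exists a $2$-coverable loopless binary matroid $M$ such that in any rank-preserving rainbow circuit-free coloring of $M$, one of the colors is used at least $g$ times.
   Context: A coloring of the ground set $S$ of $M$ is a partition of $S$ into nonempty color classes; it is rainbow circuit-free if no circuit of $M$ has all its elements of pairwise different colors, and rank-preserving if the number of colors equals the rank of $M$. A matroid is $k$-coverable if its ground set can be covered by at most $k$ independent sets. A matroid is binary if it is representable over $GF(2)$. *)

theory Defs
  imports Main "HOL-Library.Z2" "HOL-Library.Disjoint_Sets"
begin

definition matroid :: "'a set \<Rightarrow> ('a set \<Rightarrow> bool) \<Rightarrow> bool" where
  "matroid S indep \<longleftrightarrow>
     finite S \<and>
     (\<forall>X. indep X \<longrightarrow> X \<subseteq> S) \<and>
     indep {} \<and>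
     (\<forall>X Y. indep X \<longrightarrow> Y \<subseteq> X \<longrightarrow> indep Y) \<and>
     (\<forall>X Y. indep X \<longrightarrow> indep Y \<longrightarrow> card X < card Y \<longrightarrow>
        (\<exists>y\<in>Y - X. indep (insert y X)))"

definition circuit :: "'a set \<Rightarrow> ('a set \<Rightarrow> bool) \<Rightarrow> 'a set \<Rightarrow> bool" where
  "circuit S indep C \<longleftrightarrow> C \<subseteq> S \<and> \<not> indep C \<and> (\<forall>D. D \<subset> C \<longrightarrow> indep D)"

definition mrank :: "'a set \<Rightarrow> ('a set \<Rightarrow> bool) \<Rightarrow> nat" where
  "mrank S indep = Max (card ` {X. X \<subseteq> S \<and> indep X})"

definition loopless :: "'a set \<Rightarrow> ('a set \<Rightarrow> bool) \<Rightarrow> bool" where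
  "loopless S indep \<longleftrightarrow> (\<forall>e\<in>S. indep {e})"

definition coverable :: "nat \<Rightarrow> 'a set \<Rightarrow> ('a set \<Rightarrow> bool) \<Rightarrow> bool" where
  "coverable k S indep \<longleftrightarrow>
     (\<exists>F. finite F \<and> card F \<le> k \<and> (\<forall>I\<in>F. indep I) \<and> S \<subseteq> \<Union>F)"

text \<open>Linear independence over GF(2) of the family (v x) indexed by x in X, vectors in GF(2)^nat:
  over GF(2) a nontrivial linear combination is the sum over a nonempty subfamily.\<close>
definition gf2_indep :: "('a \<Rightarrow> nat \<Rightarrow> bit) \<Rightarrow> 'a set \<Rightarrow> bool" where
  "gf2_indep v X \<longleftrightarrow>
     (\<forall>Y. Y \<subseteq> X \<longrightarrow> Y \<noteq> {} \<longrightarrow> (\<lambda>i. \<Sum>y\<in>Y. v y i) \<noteq> (\<lambda>i. 0))"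

definition binary :: "'a set \<Rightarrow> ('a set \<Rightarrow> bool) \<Rightarrow> bool" where
  "binary S indep \<longleftrightarrow>
     (\<exists>v :: 'a \<Rightarrow> nat \<Rightarrow> bit. \<forall>X. X \<subseteq> S \<longrightarrow> (indep X \<longleftrightarrow> gf2_indep v X))"

text \<open>A coloring is a partition P of S into nonempty color classes.\<close>
definition rainbow_circuit_free :: "'a set \<Rightarrow> ('a set \<Rightarrow> bool) \<Rightarrow> 'a set set \<Rightarrow> bool" where
  "rainbow_circuit_free S indep P \<longleftrightarrow>
     \<not> (\<exists>C. circuit S indep C \<and> (\<forall>B\<in>P. card (C \<inter> B) \<le> 1))"

definition rank_preserving :: "'a set \<Rightarrow> ('a set \<Rightarrow> bool) \<Rightarrow> 'a set set \<Rightarrow> bool" where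
  "rank_preserving S indep P \<longleftrightarrow> card P = mrank S indep"

end

theory Submission
  imports Defs "HOL-Library.Nat_Bijection"
begin
definition ssum :: "('a \<Rightarrow> nat \<Rightarrow> bit) \<Rightarrow> 'a set \<Rightarrow> nat \<Rightarrow> bit" where
  "ssum v Y = (\<lambda>i. \<Sum>y\<in>Y. v y i)"

lemma bit_add_self[simp]: "(x::bit) + x = 0" by simp
declare add_bit_eq_xor[simp del] mult_bit_eq_and[simp del]

lemma bit_cancel: "(a::bit) + c + (b + c) = a + b"
  by (metis add.assoc add.commute add.left_commute bit_add_self add_0_right)

lemma bit_eq_iff_sum0: "((a::bit) + b = 0) = (a = b)"
  by (metis add.assoc add.commute add_0_right bit_add_self)

lemma ssum_empty[simp]: "ssum v {} = (\<lambda>i. 0)" by (simp add: ssum_def)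
lemma ssum_single[simp]: "ssum v {x} = v x" by (simp add: ssum_def)

lemma ssum_Un_disj:
  "finite A \<Longrightarrow> finite B \<Longrightarrow> A \<inter> B = {} \<Longrightarrow> ssum v (A \<union> B) = (\<lambda>i. ssum v A i + ssum v B i)"
  by (simp add: ssum_def sum.union_disjoint)

lemma ssum_insert:
  "finite A \<Longrightarrow> x \<notin> A \<Longrightarrow> ssum v (insert x A) = (\<lambda>i. v x i + ssum v A i)"
  by (simp add: ssum_def)

lemma ssum_symdiff:
  assumes "finite A" "finite B"
  shows "ssum v ((A - B) \<union> (B - A)) = (\<lambda>i. ssum v A i + ssum v B i)"
proof
  fix i
  have 1: "ssum v A i = ssum v (A - B) i + ssum v (A \<inter> B) i"
    using assms by (simp add: ssum_def sum.Int_Diff[of A _ B] add.commute)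
  have 2: "ssum v B i = ssum v (B - A) i + ssum v (A \<inter> B) i"
    using assms by (simp add: ssum_def sum.Int_Diff[of B _ A] add.commute Int_commute)
  have "ssum v ((A - B) \<union> (B - A)) i = ssum v (A - B) i + ssum v (B - A) i"
    using assms by (subst ssum_Un_disj) auto
  then show "ssum v ((A - B) \<union> (B - A)) i = ssum v A i + ssum v B i"
    using 1 2 bit_cancel by simp
qed

lemma gf2_indep_subset: "gf2_indep v X \<Longrightarrow> Y \<subseteq> X \<Longrightarrow> gf2_indep v Y"
  by (auto simp: gf2_indep_def)

lemma gf2_indepD: "gf2_indep v X \<Longrightarrow> Y \<subseteq> X \<Longrightarrow> Y \<noteq> {} \<Longrightarrow> ssum v Y \<noteq> (\<lambda>i. 0)"
  by (auto simp: gf2_indep_def ssum_def)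

lemma gf2_indepI: "(\<And>Y. Y \<subseteq> X \<Longrightarrow> Y \<noteq> {} \<Longrightarrow> ssum v Y \<noteq> (\<lambda>i. 0)) \<Longrightarrow> gf2_indep v X"
  by (auto simp: gf2_indep_def ssum_def)

lemma indep_sum_inj:
  assumes "finite X" "gf2_indep v X" "Y1 \<subseteq> X" "Y2 \<subseteq> X" "ssum v Y1 = ssum v Y2"
  shows "Y1 = Y2"
proof (rule ccontr)
  assume ne: "Y1 \<noteq> Y2"
  have f: "finite Y1" "finite Y2" using assms finite_subset by auto
  have "ssum v ((Y1 - Y2) \<union> (Y2 - Y1)) = (\<lambda>i. 0)"
    using ssum_symdiff[OF f, of v] assms(5) by simp
  moreover have "(Y1 - Y2) \<union> (Y2 - Y1) \<noteq> {}" using ne by auto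
  moreover have "(Y1 - Y2) \<union> (Y2 - Y1) \<subseteq> X" using assms by auto
  ultimately show False using gf2_indepD[OF assms(2)] by blast
qed

lemma span_closed:
  assumes "finite X" "finite Z" "\<forall>y\<in>Z. \<exists>W\<subseteq>X. ssum v W = v y"
  shows "\<exists>W\<subseteq>X. ssum v W = ssum v Z"
  using assms(2,3)
proof (induction Z rule: finite_induct)
  case empty
  then show ?case by (intro exI[of _ "{}"]) simp
next
  case (insert y Z)
  then obtain W1 where W1: "W1 \<subseteq> X" "ssum v W1 = ssum v Z" by auto
  from insert obtain W2 where W2: "W2 \<subseteq> X" "ssum v W2 = v y" by auto
  have f: "finite W1" "finite W2" using W1 W2 assms(1) finite_subset by auto
  show ?case
    apply (intro exI[of _ "(W1 - W2) \<union> (W2 - W1)"])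
    using W1 W2 ssum_symdiff[OF f, of v] ssum_insert[OF insert(1,2), of v]
    by (auto simp: add.commute)
qed

lemma card_bound:
  assumes "finite X" "finite Y" "gf2_indep v Y" "\<forall>y\<in>Y. \<exists>W\<subseteq>X. ssum v W = v y"
  shows "card Y \<le> card X"
proof -
  have inj: "inj_on (ssum v) (Pow Y)"
    using indep_sum_inj[OF assms(2,3)] by (auto simp: inj_on_def)
  have sub: "ssum v ` Pow Y \<subseteq> ssum v ` Pow X"
  proof
    fix w assume "w \<in> ssum v ` Pow Y"
    then obtain Z where "Z \<subseteq> Y" "w = ssum v Z" by auto
    moreover have "finite Z" using \<open>Z \<subseteq> Y\<close> assms(2) finite_subset by auto
    ultimately obtain W where "W \<subseteq> X" "ssum v W = w"
      using span_closed[OF assms(1), of Z v] assms(4) by auto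
    then show "w \<in> ssum v ` Pow X" by auto
  qed
  have "card (Pow Y) \<le> card (ssum v ` Pow X)"
    using card_inj_on_le[OF inj sub] assms(1) by auto
  also have "\<dots> \<le> card (Pow X)" by (rule card_image_le) (use assms(1) in auto)
  finally have "(2::nat) ^ card Y \<le> 2 ^ card X" using assms(1,2) by (simp add: card_Pow)
  then show ?thesis by simp
qed

lemma insert_indep:
  assumes "finite X" "gf2_indep v X" "x \<notin> X" "\<not> (\<exists>W\<subseteq>X. ssum v W = v x)"
  shows "gf2_indep v (insert x X)"
proof (rule gf2_indepI)
  fix Y assume Y: "Y \<subseteq> insert x X" "Y \<noteq> {}"
  show "ssum v Y \<noteq> (\<lambda>i. 0)"
  proof (cases "x \<in> Y")
    case False
    then show ?thesis using gf2_indepD[OF assms(2)] Y by blast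
  next
    case True
    have fin: "finite (Y - {x})" using Y assms(1) finite_subset by auto
    have "ssum v Y = (\<lambda>i. v x i + ssum v (Y - {x}) i)"
      using ssum_insert[OF fin, of x v] True by (simp add: insert_absorb)
    moreover have "Y - {x} \<subseteq> X" using Y by auto
    ultimately show ?thesis using assms(4) bit_eq_iff_sum0
      by (metis (no_types, lifting) ext)
  qed
qed

lemma dep_if_span:
  assumes "finite W" "x \<notin> W" "ssum v W = v x"
  shows "ssum v (insert x W) = (\<lambda>i. 0)"
  using ssum_insert[OF assms(1,2), of v] assms(3) by simp

lemma exchange:
  assumes "finite X" "finite Y" "gf2_indep v X" "gf2_indep v Y" "card X < card Y"
  shows "\<exists>y\<in>Y - X. gf2_indep v (insert y X)"
proof (rule ccontr)
  assume "\<not> ?thesis"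
  then have "\<forall>y\<in>Y. \<exists>W\<subseteq>X. ssum v W = v y"
    using insert_indep[OF assms(1,3)]
    by (metis Diff_iff empty_subsetI insert_subset ssum_single)
  then have "card Y \<le> card X" using card_bound[OF assms(1,2,4)] by auto
  then show False using assms(5) by simp
qed

lemma matroid_gf2:
  assumes "finite S"
  shows "matroid S (\<lambda>X. X \<subseteq> S \<and> gf2_indep v X)"
proof -
  have ex: "\<exists>y\<in>Y - X. insert y X \<subseteq> S \<and> gf2_indep v (insert y X)"
    if a: "X \<subseteq> S \<and> gf2_indep v X" "Y \<subseteq> S \<and> gf2_indep v Y" "card X < card Y" for X Y
  proof -
    have f: "finite X" "finite Y" using a assms finite_subset by auto
    from exchange[OF f] a obtain y where "y \<in> Y - X" "gf2_indep v (insert y X)" by blast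
    then show ?thesis using a by blast
  qed
  have e: "gf2_indep v {}" by (auto simp: gf2_indep_def)
  show ?thesis unfolding matroid_def using assms ex e gf2_indep_subset by blast
qed

lemma cycle_config:
  assumes finP: "finite P" and ne: "P \<noteq> {}"
    and out: "\<forall>B\<in>P. \<exists>B'\<in>P. R B B'"
  shows "\<exists>Q s. Q \<subseteq> P \<and> Q \<noteq> {} \<and> s ` Q = Q \<and> inj_on s Q \<and> (\<forall>B\<in>Q. R B (s B))
          \<and> (\<forall>B\<in>Q. \<forall>B'\<in>Q. R B B' \<longrightarrow> B' = s B)"
proof -
  define cfg where "cfg = (\<lambda>Q s. Q \<subseteq> P \<and> Q \<noteq> {} \<and> s ` Q \<subseteq> Q \<and> (\<forall>B\<in>Q. R B (s B)))"
  define s0 where "s0 = (\<lambda>B. SOME B'. B' \<in> P \<and> R B B')"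
  have "cfg P s0"
  proof -
    have "s0 B \<in> P \<and> R B (s0 B)" if "B \<in> P" for B
      unfolding s0_def using out that by (metis (mono_tags, lifting) someI_ex)
    then show ?thesis unfolding cfg_def using ne by auto
  qed
  then have "cfg (fst (P, s0)) (snd (P, s0))" by simp
  from ex_has_least_nat[where P="\<lambda>c. cfg (fst c) (snd c)" and m="\<lambda>c. card (fst c)", OF this]
  obtain c where c0: "cfg (fst c) (snd c)" and least: "\<forall>c'. cfg (fst c') (snd c') \<longrightarrow> card (fst c) \<le> card (fst c')"
    by (elim exE conjE) (rule that)
  define Q where "Q = fst c"
  define s where "s = snd c"
  have c: "cfg Q s" using c0 by (simp add: Q_def s_def)
  have min: "card Q \<le> card Q'" if "cfg Q' s'" for Q' s'
    using least[rule_format, of "(Q', s')"] that by (simp add: Q_def)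
  have QP: "Q \<subseteq> P" and Qne: "Q \<noteq> {}" and sQ: "s ` Q \<subseteq> Q" and Rs: "\<forall>B\<in>Q. R B (s B)"
    using c by (auto simp: cfg_def)
  have finQ: "finite Q" using QP finP finite_subset by auto
  have ssQ: "s ` (s ` Q) \<subseteq> s ` Q" using sQ by (rule image_mono)
  have "cfg (s ` Q) s" unfolding cfg_def
  proof (intro conjI)
    show "s ` Q \<subseteq> P" using sQ QP by (rule order_trans)
    show "s ` Q \<noteq> {}" using Qne by simp
    show "s ` (s ` Q) \<subseteq> s ` Q" by (rule ssQ)
    show "\<forall>B\<in>s ` Q. R B (s B)" using Rs sQ by (simp add: subset_iff)
  qed
  then have "card Q \<le> card (s ` Q)" by (rule min)
  then have sQeq: "s ` Q = Q"
    by (intro card_subset_eq[OF finQ sQ]) (use card_image_le[OF finQ, of s] in linarith)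
  have inj: "inj_on s Q" using eq_card_imp_inj_on[OF finQ, of s] sQeq by simp
  have nochord: "B' = s B" if B: "B \<in> Q" "B' \<in> Q" "R B B'" for B B'
  proof (rule ccontr)
    assume neq: "B' \<noteq> s B"
    define s' where "s' = s(B := B')"
    define Q' where "Q' = {x. \<exists>k. x = (s ^^ k) B' \<and> (\<forall>j<k. (s ^^ j) B' \<noteq> B)}"
    have inQ: "(s ^^ k) B' \<in> Q" for k
    proof (induction k)
      case 0 then show ?case using B by simp
    next
      case (Suc k) then show ?case using sQ by (simp add: image_subset_iff)
    qed
    have Q'Q: "Q' \<subseteq> Q"
    proof
      fix x assume "x \<in> Q'"
      then obtain k where "x = (s ^^ k) B'" unfolding Q'_def by blast
      then show "x \<in> Q" using inQ by simp
    qed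
    have "B' \<in> Q'" unfolding Q'_def by (simp, rule exI[of _ 0], simp)
    then have Q'ne: "Q' \<noteq> {}" by blast
    have clos: "s' x \<in> Q' \<and> R x (s' x)" if x: "x \<in> Q'" for x
    proof (cases "x = B")
      case True
      then show ?thesis using \<open>B' \<in> Q'\<close> B by (simp add: s'_def)
    next
      case False
      from x obtain k where k: "x = (s ^^ k) B'" "\<forall>j<k. (s ^^ j) B' \<noteq> B" unfolding Q'_def by blast
      have "s x = (s ^^ Suc k) B'" using k by simp
      moreover have "\<forall>j<Suc k. (s ^^ j) B' \<noteq> B" using k False by (auto simp: less_Suc_eq)
      ultimately have "s x \<in> Q'" unfolding Q'_def by blast
      moreover have "R x (s x)" using Rs x Q'Q by blast
      ultimately show ?thesis using False by (simp add: s'_def)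
    qed
    have "cfg Q' s'" unfolding cfg_def
    proof (intro conjI)
      show "Q' \<subseteq> P" using Q'Q QP by (rule order_trans)
      show "Q' \<noteq> {}" by (rule Q'ne)
      show "s' ` Q' \<subseteq> Q'" using clos by (simp add: image_subset_iff)
      show "\<forall>B\<in>Q'. R B (s' B)" using clos by simp
    qed
    then have le: "card Q \<le> card Q'" by (rule min)
    have "s B \<notin> Q'"
    proof
      assume "s B \<in> Q'"
      then obtain k where k: "s B = (s ^^ k) B'" "\<forall>j<k. (s ^^ j) B' \<noteq> B" unfolding Q'_def by blast
      show False
      proof (cases k)
        case 0
        then show False using k neq by simp
      next
        case (Suc k')
        then have e: "s B = s ((s ^^ k') B')" using k(1) by simp
        have "B = (s ^^ k') B'" using inj_onD[OF inj e B(1) inQ[of k']] .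
        then show False using k(2) Suc by (metis lessI)
      qed
    qed
    moreover have "s B \<in> Q" using B sQ by (simp add: image_subset_iff)
    ultimately have "Q' \<subset> Q" using Q'Q by blast
    then have "card Q' < card Q" using psubset_card_mono finQ by blast
    then show False using le by simp
  qed
  show ?thesis
    apply (rule exI[of _ Q], rule exI[of _ s])
    using QP Qne sQeq inj Rs nochord by simp
qed

lemma card_le1: "A \<subseteq> {a} \<Longrightarrow> card A \<le> 1"
  using card_mono[of "{a}" A] by simp

lemma of_nat_bit: "(of_nat n :: bit) = (if even n then 0 else 1)"
proof (induction n)
  case 0 then show ?case by simp
next
  case (Suc n) then show ?case by (simp add: add.commute)
qed

lemma sum_if_const: "finite A \<Longrightarrow> (\<Sum>x\<in>A. if P x then (c::bit) else 0) = of_nat (card {x\<in>A. P x}) * c"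
  by (simp add: sum.inter_filter[symmetric])

lemma main_lemma:
  fixes v :: "'a \<Rightarrow> nat \<Rightarrow> bit" and S :: "'a set"
  assumes finS: "finite S" and Sne: "S \<noteq> {}"
    and DP: "\<And>T t. T \<subseteq> S \<Longrightarrow> gf2_indep v T \<Longrightarrow> (\<forall>x\<in>S. \<exists>Z\<subseteq>T. ssum v Z = v x) \<Longrightarrow> t \<in> T \<Longrightarrow>
              g \<le> card {x\<in>S. \<exists>Z\<subseteq>T. t \<in> Z \<and> ssum v Z = v x}"
    and part: "partition_on S P"
    and rk: "card P = mrank S (\<lambda>X. X \<subseteq> S \<and> gf2_indep v X)"
    and rcf: "rainbow_circuit_free S (\<lambda>X. X \<subseteq> S \<and> gf2_indep v X) P"
  shows "\<exists>B\<in>P. g \<le> card B"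
proof -
  define ind where "ind = (\<lambda>X. X \<subseteq> S \<and> gf2_indep v X)"
  have Pcov: "\<Union>P = S" and Pne: "{} \<notin> P" using part unfolding partition_on_def by blast+
  have Pdisj: "disjoint P" using part unfolding partition_on_def by blast
  have uniqB: "B = B'" if "B\<in>P" "B'\<in>P" "x\<in>B" "x\<in>B'" for B B' x
    using Pdisj that unfolding disjoint_def by blast
  have PS: "B \<subseteq> S" if "B\<in>P" for B using Pcov that by blast
  have finP: "finite P" using finS Pcov by (metis finite_UnionD)
  have PnE: "P \<noteq> {}" using Sne Pcov by blast
  have rainbow: "gf2_indep v Y" if Y: "Y \<subseteq> S" "\<forall>B\<in>P. card (Y \<inter> B) \<le> 1" for Y
  proof (rule ccontr)
    assume nd: "\<not> gf2_indep v Y"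
    have "Y \<subseteq> Y \<and> \<not> gf2_indep v Y" using nd by blast
    from ex_has_least_nat[where P="\<lambda>C. C \<subseteq> Y \<and> \<not> gf2_indep v C" and m=card, OF this]
    obtain C where C: "C \<subseteq> Y" "\<not> gf2_indep v C"
      and Cmin: "\<forall>C'. C' \<subseteq> Y \<and> \<not> gf2_indep v C' \<longrightarrow> card C \<le> card C'"
      by (elim exE conjE) (rule that)
    have finY: "finite Y" using Y(1) finS finite_subset by blast
    have finC: "finite C" using C(1) finY finite_subset by blast
    have CS: "C \<subseteq> S" using C(1) Y(1) by (rule order_trans)
    have sub: "D \<subseteq> S \<and> gf2_indep v D" if D: "D \<subset> C" for D
    proof -
      have "card D < card C" using psubset_card_mono finC D by blast
      moreover have "D \<subseteq> Y" using D C(1) by blast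
      ultimately have "gf2_indep v D" using Cmin by (meson not_le)
      then show "D \<subseteq> S \<and> gf2_indep v D" using D CS by blast
    qed
    have "circuit S ind C" unfolding circuit_def ind_def using CS C(2) sub by blast
    moreover have "\<forall>B\<in>P. card (C \<inter> B) \<le> 1"
    proof
      fix B assume "B \<in> P"
      have "card (C \<inter> B) \<le> card (Y \<inter> B)"
        by (rule card_mono) (use finY C(1) in auto)
      then show "card (C \<inter> B) \<le> 1" using Y(2) \<open>B\<in>P\<close> by fastforce
    qed
    ultimately show False using rcf unfolding rainbow_circuit_free_def ind_def by blast
  qed
  define t where "t = (\<lambda>B::'a set. SOME x. x \<in> B)"
  have tB: "t B \<in> B" if "B \<in> P" for B
  proof -
    have "\<exists>x. x \<in> B" using Pne that by (metis ex_in_conv)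
    then show ?thesis unfolding t_def by (rule someI_ex)
  qed
  define T where "T = t ` P"
  have TS: "T \<subseteq> S" unfolding T_def using tB PS by blast
  have TB: "x = t B" if "x \<in> T" "x \<in> B" "B \<in> P" for x B
  proof -
    from that(1) obtain B' where B': "B' \<in> P" "x = t B'" unfolding T_def by blast
    then have "B = B'" using uniqB[OF that(3) B'(1) that(2)] tB[OF B'(1)] by blast
    then show ?thesis using B' by simp
  qed
  have injt: "inj_on t P"
  proof (rule inj_onI)
    fix B B' assume "B \<in> P" "B' \<in> P" "t B = t B'"
    then show "B = B'" using uniqB tB by metis
  qed
  have cardT: "card T = card P" unfolding T_def by (rule card_image[OF injt])
  have finT: "finite T" unfolding T_def using finP by blast
  have tT: "t B \<in> T" if "B \<in> P" for B unfolding T_def using that by blast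
  have indT: "gf2_indep v T"
  proof (rule rainbow[OF TS], rule ballI)
    fix B assume B: "B \<in> P"
    have "T \<inter> B \<subseteq> {t B}" using TB B by blast
    then show "card (T \<inter> B) \<le> 1" by (rule card_le1)
  qed
  have mr: "card X \<le> card P" if "X \<subseteq> S" "gf2_indep v X" for X
  proof -
    have fin: "finite (card ` {X. X \<subseteq> S \<and> gf2_indep v X})" using finS by simp
    have "card X \<in> card ` {X. X \<subseteq> S \<and> gf2_indep v X}" using that by blast
    then have "card X \<le> Max (card ` {X. X \<subseteq> S \<and> gf2_indep v X})" using fin by (rule Max_ge[rotated])
    then show ?thesis using rk unfolding mrank_def by simp
  qed
  have span: "\<exists>Z\<subseteq>T. ssum v Z = v x" if xS: "x \<in> S" for x
  proof (cases "x \<in> T")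
    case True then show ?thesis by (intro exI[of _ "{x}"]) simp
  next
    case False
    show ?thesis
    proof (rule ccontr)
      assume "\<not> ?thesis"
      then have "gf2_indep v (insert x T)" using insert_indep[OF finT indT False] by blast
      moreover have "insert x T \<subseteq> S" using xS TS by blast
      ultimately have "card (insert x T) \<le> card P" using mr by blast
      then show False using cardT False finT by simp
    qed
  qed
  define co where "co = (\<lambda>x. SOME Z. Z \<subseteq> T \<and> ssum v Z = v x)"
  have co: "co x \<subseteq> T \<and> ssum v (co x) = v x" if "x \<in> S" for x
  proof -
    from span[OF that] have "\<exists>Z. Z \<subseteq> T \<and> ssum v Z = v x" by blast
    then show ?thesis unfolding co_def by (rule someI_ex)
  qed
  have co_uniq: "Z = co x" if "x \<in> S" "Z \<subseteq> T" "ssum v Z = v x" for x Z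
    using indep_sum_inj[OF finT indT that(2)] co[OF that(1)] that(3) by metis
  have fa: "t B \<in> co x" if B: "B \<in> P" "x \<in> B" for B x
  proof (cases "x = t B")
    case True
    have xS: "x \<in> S" using PS B by blast
    have "{t B} = co x" using co_uniq[OF xS, of "{t B}"] True tT[OF B(1)] by simp
    then show ?thesis by blast
  next
    case False
    have xS: "x \<in> S" using PS B by blast
    have xT: "x \<notin> T" using TB B False by blast
    show ?thesis
    proof (rule ccontr)
      assume nt: "t B \<notin> co x"
      define Y where "Y = insert x (co x)"
      have coT: "co x \<subseteq> T" using co[OF xS] by blast
      have finco: "finite (co x)" using coT finT finite_subset by blast
      have YS: "Y \<subseteq> S" unfolding Y_def using xS coT TS by blast
      have "\<forall>B'\<in>P. card (Y \<inter> B') \<le> 1"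
      proof
        fix B' assume B': "B' \<in> P"
        have "Y \<inter> B' \<subseteq> {if B' = B then x else t B'}"
        proof
          fix y assume y: "y \<in> Y \<inter> B'"
          show "y \<in> {if B' = B then x else t B'}"
          proof (cases "y = x")
            case True then have "B' = B" using uniqB[OF B' B(1)] y B(2) by blast
            then show ?thesis using True by simp
          next
            case False
            then have yco: "y \<in> co x" using y unfolding Y_def by blast
            then have "y \<in> T" using coT by blast
            then have yt: "y = t B'" using TB y B' by blast
            have "B' \<noteq> B" using nt yco yt by blast
            then show ?thesis using yt by simp
          qed
        qed
        then show "card (Y \<inter> B') \<le> 1" by (rule card_le1)
      qed
      then have "gf2_indep v Y" using rainbow YS by blast
      moreover have "ssum v Y = (\<lambda>i. 0)" unfolding Y_def
        using dep_if_span[OF finco] xT coT co[OF xS] by blast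
      ultimately show False using gf2_indepD[of v Y Y] unfolding Y_def by blast
    qed
  qed
  define R where "R = (\<lambda>B B'. B' \<in> P \<and> B' \<noteq> B \<and> (\<exists>x\<in>B'. t B \<in> co x))"
  show ?thesis
  proof (cases "\<exists>B\<in>P. \<forall>B'. \<not> R B B'")
    case True
    then obtain B0 where B0: "B0 \<in> P" "\<forall>B'. \<not> R B0 B'" by blast
    define D where "D = {x\<in>S. \<exists>Z\<subseteq>T. t B0 \<in> Z \<and> ssum v Z = v x}"
    have "D \<subseteq> B0"
    proof
      fix x assume x: "x \<in> D"
      then obtain Z where Z: "Z \<subseteq> T" "t B0 \<in> Z" "ssum v Z = v x" and xS: "x\<in>S"
        unfolding D_def by blast
      have Zc: "Z = co x" using co_uniq[OF xS Z(1) Z(3)] .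
      from xS Pcov obtain B' where B': "B' \<in> P" "x \<in> B'" by blast
      show "x \<in> B0"
      proof (rule ccontr)
        assume "x \<notin> B0"
        then have "B' \<noteq> B0" using B' by blast
        then have "R B0 B'" unfolding R_def using B' Z(2) Zc by blast
        then show False using B0 by blast
      qed
    qed
    then have "card D \<le> card B0" using card_mono finite_subset[OF PS[OF B0(1)] finS] by blast
    moreover have "g \<le> card D" unfolding D_def by (rule DP[OF TS indT _ tT[OF B0(1)]]) (use span in blast)
    ultimately have "g \<le> card B0" by linarith
    then show ?thesis using B0(1) by blast
  next
    case False
    then have out: "\<forall>B\<in>P. \<exists>B'\<in>P. R B B'" unfolding R_def by blast
    from cycle_config[OF finP PnE out] obtain Q s where
      H: "Q \<subseteq> P \<and> Q \<noteq> {} \<and> s ` Q = Q \<and> inj_on s Q \<and> (\<forall>B\<in>Q. R B (s B))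
          \<and> (\<forall>B\<in>Q. \<forall>B'\<in>Q. R B B' \<longrightarrow> B' = s B)"
      by (elim exE) (rule that)
    have QP: "Q \<subseteq> P" and Qne: "Q \<noteq> {}" and sQ: "s ` Q = Q" and injs: "inj_on s Q"
      and Rs: "\<forall>B\<in>Q. R B (s B)" and nochord: "\<forall>B\<in>Q. \<forall>B'\<in>Q. R B B' \<longrightarrow> B' = s B"
      using H by simp_all
    have finQ: "finite Q" using QP finP finite_subset by blast
    have sQ': "s B \<in> Q" if "B \<in> Q" for B using imageI[OF that, of s] sQ by simp
    have sP: "s B \<in> P" if "B \<in> Q" for B using sQ' QP that by blast
    have sne: "s B \<noteq> B" if "B \<in> Q" for B using Rs that unfolding R_def by blast
    define y where "y = (\<lambda>B. SOME x. x \<in> s B \<and> t B \<in> co x)"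
    have y: "y B \<in> s B \<and> t B \<in> co (y B)" if "B \<in> Q" for B
    proof -
      have "\<exists>x. x \<in> s B \<and> t B \<in> co x" using Rs that unfolding R_def by blast
      then show ?thesis unfolding y_def by (rule someI_ex)
    qed
    have yS: "y B \<in> S" if "B \<in> Q" for B using y[OF that] PS[OF sP[OF that]] by blast
    have injy: "inj_on y Q"
    proof (rule inj_onI)
      fix B B' assume B: "B \<in> Q" "B' \<in> Q" "y B = y B'"
      have "s B = s B'" using uniqB[OF sP[OF B(1)] sP[OF B(2)]] y[OF B(1)] y[OF B(2)] B(3) by metis
      then show "B = B'" by (rule inj_onD[OF injs _ B(1,2)])
    qed
    define cnt where "cnt = (\<lambda>z. card {B\<in>Q. z \<in> co (y B)})"
    define U where "U = {z \<in> T - t ` Q. odd (cnt z)}"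
    define Y0 where "Y0 = y ` Q"
    have cnt2: "cnt (t B2) = 2" if B2: "B2 \<in> Q" for B2
    proof -
      obtain B1 where B1: "B1 \<in> Q" "s B1 = B2" using sQ B2 by (metis imageE)
      have ne: "B1 \<noteq> B2" using B1 sne[OF B2] by blast
      have "{B\<in>Q. t B2 \<in> co (y B)} = {B2, B1}"
      proof
        show "{B2, B1} \<subseteq> {B\<in>Q. t B2 \<in> co (y B)}"
        proof -
          have "t B2 \<in> co (y B2)" using y[OF B2] by blast
          moreover have "t B2 \<in> co (y B1)" using fa[OF QP[THEN subsetD, OF B2]] y[OF B1(1)] B1(2) by blast
          ultimately show ?thesis using B1(1) B2 by blast
        qed
      next
        show "{B\<in>Q. t B2 \<in> co (y B)} \<subseteq> {B2, B1}"
        proof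
          fix B assume B: "B \<in> {B\<in>Q. t B2 \<in> co (y B)}"
          then have BQ: "B \<in> Q" and tin: "t B2 \<in> co (y B)" by auto
          show "B \<in> {B2, B1}"
          proof (cases "B = B2")
            case True then show ?thesis by blast
          next
            case False
            show ?thesis
            proof (cases "s B = B2")
              case True
              then have "B = B1" using injs BQ B1 by (metis inj_onD)
              then show ?thesis by blast
            next
              case False2: False
              have "R B2 (s B)" unfolding R_def using sP[OF BQ] False2 y[OF BQ] tin by blast
              then have "s B = s B2" using nochord B2 sQ'[OF BQ] by blast
              then have "B = B2" using injs BQ B2 by (metis inj_onD)
              then show ?thesis using False by blast
            qed
          qed
        qed
      qed
      then show ?thesis unfolding cnt_def using ne by simp
    qed
    have key: "ssum v Y0 = ssum v U"
    proof
      fix i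
      have tQT: "t ` Q \<subseteq> T" unfolding T_def using QP by blast
      have "ssum v Y0 i = (\<Sum>B\<in>Q. v (y B) i)"
        unfolding Y0_def ssum_def by (rule sum.reindex[OF injy, unfolded comp_def])
      also have "\<dots> = (\<Sum>B\<in>Q. \<Sum>z\<in>T. if z \<in> co (y B) then v z i else 0)"
      proof (rule sum.cong[OF refl])
        fix B assume B: "B \<in> Q"
        have c: "co (y B) \<subseteq> T" "ssum v (co (y B)) = v (y B)" using co[OF yS[OF B]] by auto
        have "v (y B) i = (\<Sum>z\<in>co (y B). v z i)" using c(2) unfolding ssum_def by metis
        also have "\<dots> = (\<Sum>z\<in>T \<inter> co (y B). v z i)" using c(1) by (simp add: Int_absorb1)
        also have "\<dots> = (\<Sum>z\<in>T. if z \<in> co (y B) then v z i else 0)"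
          by (rule sum.inter_restrict[OF finT])
        finally show "v (y B) i = (\<Sum>z\<in>T. if z \<in> co (y B) then v z i else 0)" .
      qed
      also have "\<dots> = (\<Sum>z\<in>T. \<Sum>B\<in>Q. if z \<in> co (y B) then v z i else 0)"
        by (rule sum.swap)
      also have "\<dots> = (\<Sum>z\<in>T. of_nat (cnt z) * v z i)"
        unfolding cnt_def by (rule sum.cong[OF refl]) (rule sum_if_const[OF finQ])
      also have "\<dots> = (\<Sum>z\<in>T - t ` Q. of_nat (cnt z) * v z i) + (\<Sum>z\<in>t ` Q. of_nat (cnt z) * v z i)"
        by (rule sum.subset_diff[OF tQT finT])
      also have "(\<Sum>z\<in>t ` Q. of_nat (cnt z) * v z i) = 0"
      proof (rule sum.neutral, rule ballI)
        fix z assume "z \<in> t ` Q"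
        then obtain B2 where "B2 \<in> Q" "z = t B2" by blast
        then have "cnt z = 2" using cnt2 by blast
        then show "of_nat (cnt z) * v z i = 0" by (simp add: of_nat_bit)
      qed
      also have "(\<Sum>z\<in>T - t ` Q. of_nat (cnt z) * v z i) = (\<Sum>z\<in>T - t ` Q. if odd (cnt z) then v z i else 0)"
        by (rule sum.cong[OF refl]) (simp add: of_nat_bit)
      also have "\<dots> = ssum v U i"
        unfolding ssum_def U_def by (rule sum.inter_filter[symmetric]) (use finT in simp)
      finally show "ssum v Y0 i = ssum v U i" by simp
    qed
    define Y where "Y = Y0 \<union> U"
    have finY0: "finite Y0" unfolding Y0_def using finQ by blast
    have finU: "finite U" unfolding U_def using finT by simp
    have disjYU: "Y0 \<inter> U = {}"
    proof (rule ccontr)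
      assume "Y0 \<inter> U \<noteq> {}"
      then obtain B where B: "B \<in> Q" "y B \<in> U" unfolding Y0_def by blast
      then have "y B \<in> T" "y B \<notin> t ` Q" unfolding U_def by auto
      moreover have "y B = t (s B)" using TB[OF \<open>y B \<in> T\<close>] y[OF B(1)] sP[OF B(1)] by blast
      ultimately show False using sQ'[OF B(1)] by blast
    qed
    have ssY: "ssum v Y = (\<lambda>i. 0)"
      unfolding Y_def using ssum_Un_disj[OF finY0 finU disjYU, of v] key by simp
    have Yne: "Y \<noteq> {}" unfolding Y_def Y0_def using Qne by blast
    have YS: "Y \<subseteq> S"
    proof -
      have "Y0 \<subseteq> S" unfolding Y0_def using yS by blast
      moreover have "U \<subseteq> S" unfolding U_def using TS by blast
      ultimately show ?thesis unfolding Y_def by blast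
    qed
    have "\<forall>B'\<in>P. card (Y \<inter> B') \<le> 1"
    proof
      fix B' assume B': "B' \<in> P"
      show "card (Y \<inter> B') \<le> 1"
      proof (cases "B' \<in> Q")
        case True
        obtain B1 where B1: "B1 \<in> Q" "s B1 = B'" using sQ True by (metis imageE)
        have "Y \<inter> B' \<subseteq> {y B1}"
        proof
          fix w assume w: "w \<in> Y \<inter> B'"
          show "w \<in> {y B1}"
          proof (cases "w \<in> Y0")
            case True
            then obtain B where B: "B \<in> Q" "w = y B" unfolding Y0_def by blast
            have "s B = B'" using uniqB[OF sP[OF B(1)] B'] y[OF B(1)] B(2) w by blast
            then have "B = B1" using injs B(1) B1 by (metis inj_onD)
            then show ?thesis using B by simp
          next
            case False
            then have "w \<in> U" using w unfolding Y_def by blast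
            then have "w \<in> T" "w \<notin> t ` Q" unfolding U_def by auto
            moreover have "w = t B'" using TB[OF \<open>w \<in> T\<close>] w B' by blast
            ultimately show ?thesis using True by blast
          qed
        qed
        then show ?thesis by (rule card_le1)
      next
        case False
        have "Y \<inter> B' \<subseteq> {t B'}"
        proof
          fix w assume w: "w \<in> Y \<inter> B'"
          show "w \<in> {t B'}"
          proof (cases "w \<in> Y0")
            case True
            then obtain B where B: "B \<in> Q" "w = y B" unfolding Y0_def by blast
            have "s B = B'" using uniqB[OF sP[OF B(1)] B'] y[OF B(1)] B(2) w by blast
            then show ?thesis using sQ'[OF B(1)] False by blast
          next
            case F2: False
            then have "w \<in> U" using w unfolding Y_def by blast
            then have "w \<in> T" unfolding U_def by auto
            then show ?thesis using TB w B' by blast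
          qed
        qed
        then show ?thesis by (rule card_le1)
      qed
    qed
    then have "gf2_indep v Y" using rainbow YS by blast
    then show ?thesis using gf2_indepD[of v Y Y] Yne ssY by blast
  qed
qed

definition peval :: "(nat set \<Rightarrow> bit) \<Rightarrow> nat set \<Rightarrow> bit" where
  "peval C p = (\<Sum>A\<in>Pow p. C A)"

lemma peval_insert:
  assumes "finite p" "m \<notin> p"
  shows "peval C (insert m p) = peval C p + (\<Sum>A\<in>Pow p. C (insert m A))"
proof -
  have d: "Pow p \<inter> insert m ` Pow p = {}" using assms(2) by blast
  have inj: "inj_on (insert m) (Pow p)"
  proof (rule inj_onI)
    fix A B assume "A \<in> Pow p" "B \<in> Pow p" "insert m A = insert m B"
    then show "A = B" using assms(2) by (metis PowD insert_ident subset_iff)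
  qed
  have "peval C (insert m p) = (\<Sum>A\<in>Pow p \<union> insert m ` Pow p. C A)"
    unfolding peval_def by (simp add: Pow_insert)
  also have "\<dots> = (\<Sum>A\<in>Pow p. C A) + (\<Sum>A\<in>insert m ` Pow p. C A)"
    by (rule sum.union_disjoint) (use assms(1) d in auto)
  also have "(\<Sum>A\<in>insert m ` Pow p. C A) = (\<Sum>A\<in>Pow p. C (insert m A))"
    using sum.reindex[OF inj, of C] by simp
  finally show ?thesis unfolding peval_def .
qed

lemma sub_lt1: "q \<subseteq> {..<Suc m} \<Longrightarrow> m \<notin> q \<Longrightarrow> q \<subseteq> {..<m}"
proof
  fix x assume "q \<subseteq> {..<Suc m}" "m \<notin> q" "x \<in> q"
  then have "x < Suc m" "x \<noteq> m" by auto
  then show "x \<in> {..<m}" by simp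
qed

lemma sub_lt2: "q \<subseteq> {..<Suc m} \<Longrightarrow> q - {m} \<subseteq> {..<m}"
  using sub_lt1[of "q - {m}" m] by blast

lemma poly_count:
  "\<forall>d C. (\<forall>A. C A \<noteq> 0 \<longrightarrow> A \<subseteq> {..<m} \<and> card A \<le> d) \<longrightarrow> (\<exists>p\<subseteq>{..<m}. peval C p \<noteq> 0)
     \<longrightarrow> 2 ^ (m - d) \<le> card {p \<in> Pow {..<m}. peval C p \<noteq> 0}"
proof (induction m)
  case 0
  show ?case
  proof (intro allI impI)
    fix d C assume "\<exists>p\<subseteq>{..<0::nat}. peval C p \<noteq> 0"
    then have "peval C {} \<noteq> 0" by auto
    then have "{p \<in> Pow {..<0::nat}. peval C p \<noteq> 0} = {{}}" by auto
    then show "2 ^ (0 - d) \<le> card {p \<in> Pow {..<0::nat}. peval C p \<noteq> 0}" by simp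
  qed
next
  case (Suc m)
  show ?case
  proof (intro allI impI)
    fix d C
    assume supp: "\<forall>A. C A \<noteq> 0 \<longrightarrow> A \<subseteq> {..<Suc m} \<and> card A \<le> d"
      and nz: "\<exists>p\<subseteq>{..<Suc m}. peval C p \<noteq> 0"
    define C0 where "C0 = (\<lambda>A. if m \<in> A then 0 else C A)"
    define C1 where "C1 = (\<lambda>A. if m \<in> A then 0 else C (insert m A))"
    define C01 where "C01 = (\<lambda>A. C0 A + C1 A)"
    have ev0: "peval C p = peval C0 p" if "p \<subseteq> {..<m}" for p
      unfolding peval_def C0_def using that by (intro sum.cong) auto
    have ev1: "peval C (insert m p) = peval C01 p" if p: "p \<subseteq> {..<m}" for p
    proof -
      have fp: "finite p" using p by (rule finite_subset) simp
      have mp: "m \<notin> p" using p by blast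
      have "peval C (insert m p) = peval C p + (\<Sum>A\<in>Pow p. C (insert m A))"
        by (rule peval_insert[OF fp mp])
      also have "peval C p = peval C0 p" using ev0[OF p] .
      also have "(\<Sum>A\<in>Pow p. C (insert m A)) = peval C1 p"
        unfolding peval_def C1_def using mp by (intro sum.cong) auto
      finally show ?thesis unfolding C01_def peval_def by (simp add: sum.distrib)
    qed
    have s0: "\<forall>A. C0 A \<noteq> 0 \<longrightarrow> A \<subseteq> {..<m} \<and> card A \<le> d"
    proof (intro allI impI)
      fix A assume "C0 A \<noteq> 0"
      then have mA: "m \<notin> A" "C A \<noteq> 0" unfolding C0_def by (auto split: if_splits)
      then have h: "A \<subseteq> {..<Suc m}" "card A \<le> d" using supp by blast+
      have "A \<subseteq> {..<m}"
      proof
        fix x assume "x \<in> A"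
        then have "x < Suc m" "x \<noteq> m" using h(1) mA(1) by auto
        then show "x \<in> {..<m}" by simp
      qed
      then show "A \<subseteq> {..<m} \<and> card A \<le> d" using h(2) by blast
    qed
    have s1: "A \<subseteq> {..<m} \<and> card A + 1 \<le> d" if "C1 A \<noteq> 0" for A
    proof -
      have mA: "m \<notin> A" "C (insert m A) \<noteq> 0" using that unfolding C1_def by (auto split: if_splits)
      then have h: "insert m A \<subseteq> {..<Suc m}" "card (insert m A) \<le> d" using supp by blast+
      have Am: "A \<subseteq> {..<m}"
      proof
        fix x assume "x \<in> A"
        then have "x < Suc m" "x \<noteq> m" using h(1) mA(1) by auto
        then show "x \<in> {..<m}" by simp
      qed
      have "finite A" using Am by (rule finite_subset) simp
      then have "card (insert m A) = card A + 1" using mA(1) by simp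
      then show ?thesis using h(2) Am by simp
    qed
    have s1': "\<forall>A. C1 A \<noteq> 0 \<longrightarrow> A \<subseteq> {..<m} \<and> card A \<le> d - 1"
    proof (intro allI impI)
      fix A assume "C1 A \<noteq> 0"
      from s1[OF this] show "A \<subseteq> {..<m} \<and> card A \<le> d - 1" by linarith
    qed
    have s01: "\<forall>A. C01 A \<noteq> 0 \<longrightarrow> A \<subseteq> {..<m} \<and> card A \<le> d"
    proof (intro allI impI)
      fix A assume "C01 A \<noteq> 0"
      then have "C0 A \<noteq> 0 \<or> C1 A \<noteq> 0" unfolding C01_def by auto
      then show "A \<subseteq> {..<m} \<and> card A \<le> d"
      proof
        assume "C0 A \<noteq> 0" then show ?thesis using s0 by blast
      next
        assume "C1 A \<noteq> 0" from s1[OF this] show ?thesis by linarith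
      qed
    qed
    define X0 where "X0 = {p \<in> Pow {..<m}. peval C0 p \<noteq> 0}"
    define X1 where "X1 = {p \<in> Pow {..<m}. peval C01 p \<noteq> 0}"
    have Xeq: "{q \<in> Pow {..<Suc m}. peval C q \<noteq> 0} = X0 \<union> insert m ` X1"
    proof
      show "{q \<in> Pow {..<Suc m}. peval C q \<noteq> 0} \<subseteq> X0 \<union> insert m ` X1"
      proof
        fix q assume q: "q \<in> {q \<in> Pow {..<Suc m}. peval C q \<noteq> 0}"
        show "q \<in> X0 \<union> insert m ` X1"
        proof (cases "m \<in> q")
          case True
          define p where "p = q - {m}"
          have qS: "q \<subseteq> {..<Suc m}" using q by simp
          have p: "p \<subseteq> {..<m}" unfolding p_def using qS by (rule sub_lt2)
          have qp: "q = insert m p" using True unfolding p_def by (rule insert_Diff[symmetric])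
          have "peval C q \<noteq> 0" using q by simp
          then have "peval C01 p \<noteq> 0" unfolding qp ev1[OF p] .
          then have "p \<in> X1" using p unfolding X1_def by blast
          then show ?thesis unfolding qp by (rule UnI2[OF imageI])
        next
          case False
          have qS: "q \<subseteq> {..<Suc m}" using q by simp
          have p: "q \<subseteq> {..<m}" using qS False by (rule sub_lt1)
          have "peval C q \<noteq> 0" using q by simp
          then have "peval C0 q \<noteq> 0" unfolding ev0[OF p] .
          then have "q \<in> X0" unfolding X0_def using p by simp
          then show ?thesis by (rule UnI1)
        qed
      qed
    next
      show "X0 \<union> insert m ` X1 \<subseteq> {q \<in> Pow {..<Suc m}. peval C q \<noteq> 0}"
      proof
        fix q assume "q \<in> X0 \<union> insert m ` X1"
        then show "q \<in> {q \<in> Pow {..<Suc m}. peval C q \<noteq> 0}"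
        proof
          assume "q \<in> X0"
          then have p: "q \<subseteq> {..<m}" "peval C0 q \<noteq> 0" unfolding X0_def by auto
          then have "peval C q \<noteq> 0" using ev0[OF p(1)] by simp
          moreover have "q \<subseteq> {..<Suc m}" using p(1) by auto
          ultimately show ?thesis by blast
        next
          assume "q \<in> insert m ` X1"
          then obtain p where p: "p \<in> X1" "q = insert m p" by blast
          then have pm: "p \<subseteq> {..<m}" "peval C01 p \<noteq> 0" unfolding X1_def by auto
          then have "peval C q \<noteq> 0" using ev1[OF pm(1)] p(2) by simp
          moreover have "q \<subseteq> {..<Suc m}" using pm(1) p(2) by auto
          ultimately show ?thesis by blast
        qed
      qed
    qed
    have finX1: "finite X1" unfolding X1_def by simp
    have injX1: "inj_on (insert m) X1"
    proof (rule inj_onI)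
      fix A B assume "A \<in> X1" "B \<in> X1" "insert m A = insert m B"
      then have "A \<subseteq> {..<m}" "B \<subseteq> {..<m}" "insert m A = insert m B" unfolding X1_def by simp_all
      then have "m \<notin> A" "m \<notin> B" "insert m A = insert m B" by auto
      then show "A = B" by (metis insert_ident)
    qed
    have cardX: "card {q \<in> Pow {..<Suc m}. peval C q \<noteq> 0} = card X0 + card X1"
    proof -
      have "X0 \<inter> insert m ` X1 = {}"
      proof (rule ccontr)
        assume "X0 \<inter> insert m ` X1 \<noteq> {}"
        then obtain x where "x \<in> X0" "x \<in> insert m ` X1" by blast
        then have "x \<subseteq> {..<m}" "m \<in> x" unfolding X0_def by auto
        then show False by auto
      qed
      moreover have "finite X0" unfolding X0_def by simp
      moreover have "finite (insert m ` X1)" using finX1 by simp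
      ultimately have "card (X0 \<union> insert m ` X1) = card X0 + card (insert m ` X1)"
        by (intro card_Un_disjoint)
      then show ?thesis using Xeq card_image[OF injX1] by simp
    qed
    show "2 ^ (Suc m - d) \<le> card {p \<in> Pow {..<Suc m}. peval C p \<noteq> 0}"
    proof (cases "(\<exists>p\<subseteq>{..<m}. peval C0 p \<noteq> 0) \<and> (\<exists>p\<subseteq>{..<m}. peval C01 p \<noteq> 0)")
      case True
      then have "2 ^ (m - d) \<le> card X0" "2 ^ (m - d) \<le> card X1"
        using Suc.IH s0 s01 unfolding X0_def X1_def by blast+
      moreover have "(2::nat) ^ (Suc m - d) \<le> 2 * 2 ^ (m - d)"
        by (cases "d \<le> m") (auto simp: Suc_diff_le)
      ultimately show ?thesis using cardX by linarith
    next
      case False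
      have eq1: "\<exists>p\<subseteq>{..<m}. peval C1 p \<noteq> 0"
      proof -
        from nz obtain q where q: "q \<subseteq> {..<Suc m}" "peval C q \<noteq> 0" by blast
        have "\<exists>p\<subseteq>{..<m}. peval C0 p \<noteq> 0 \<or> peval C01 p \<noteq> 0"
        proof (cases "m \<in> q")
          case True
          have p: "q - {m} \<subseteq> {..<m}" using q(1) by (rule sub_lt2)
          have qi: "insert m (q - {m}) = q" using True by blast
          have "peval C q = peval C01 (q - {m})" using ev1[OF p] unfolding qi .
          then have "peval C01 (q - {m}) \<noteq> 0" using q(2) by simp
          then show ?thesis using p by blast
        next
          case False
          have qS: "q \<subseteq> {..<Suc m}" using q by simp
          have p: "q \<subseteq> {..<m}" using qS False by (rule sub_lt1)
          then show ?thesis using ev0[OF p] q(2) by auto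
        qed
        then obtain p where p: "p \<subseteq> {..<m}" "peval C0 p \<noteq> 0 \<or> peval C01 p \<noteq> 0" by blast
        have e01: "peval C01 p = peval C0 p + peval C1 p" for p
          unfolding peval_def C01_def by (simp add: sum.distrib)
        show ?thesis
        proof (cases "\<exists>p\<subseteq>{..<m}. peval C0 p \<noteq> 0")
          case True
          then have all0: "\<forall>p\<subseteq>{..<m}. peval C01 p = 0" using False by blast
          from True obtain p where "p \<subseteq> {..<m}" "peval C0 p \<noteq> 0" by blast
          note pp = this
          have "peval C01 p = 0" using all0 pp(1) by blast
          then have "peval C0 p + peval C1 p = 0" unfolding e01 .
          then have "peval C0 p = peval C1 p" unfolding bit_eq_iff_sum0 .
          then have "peval C1 p \<noteq> 0" using pp(2) by simp
          then show ?thesis using \<open>p \<subseteq> {..<m}\<close> by blast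
        next
          case False2: False
          then have "peval C01 p \<noteq> 0" "peval C0 p = 0" using p by auto
          then have "peval C1 p \<noteq> 0" using e01 by simp
          then show ?thesis using p(1) by blast
        qed
      qed
      have d1: "1 \<le> d"
      proof (rule ccontr)
        assume nd: "\<not> 1 \<le> d"
        have "\<forall>A. C1 A = 0"
        proof
          fix A show "C1 A = 0"
          proof (rule ccontr)
            assume "C1 A \<noteq> 0"
            from s1[OF this] nd show False by linarith
          qed
        qed
        then have "\<forall>p. peval C1 p = 0" unfolding peval_def by simp
        then show False using eq1 by blast
      qed
      have IH1: "2 ^ (m - (d - 1)) \<le> card {p \<in> Pow {..<m}. peval C1 p \<noteq> 0}"
        using Suc.IH[THEN spec, THEN spec, THEN mp, THEN mp, OF s1' eq1] .
      have ex: "Suc m - d = m - (d - 1)" using d1 by simp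
      have e01: "peval C01 p = peval C0 p + peval C1 p" for p
        unfolding peval_def C01_def by (simp add: sum.distrib)
      have "card {p \<in> Pow {..<m}. peval C1 p \<noteq> 0} \<le> card X0 + card X1"
      proof (cases "\<exists>p\<subseteq>{..<m}. peval C0 p \<noteq> 0")
        case True
        then have all0: "\<forall>p\<subseteq>{..<m}. peval C01 p = 0" using False by blast
        have eqC: "peval C1 p = peval C0 p" if "p \<subseteq> {..<m}" for p
        proof -
          have "peval C0 p + peval C1 p = 0" using all0 that e01 by simp
          then show ?thesis unfolding bit_eq_iff_sum0 by simp
        qed
        have "{p \<in> Pow {..<m}. peval C1 p \<noteq> 0} = X0" unfolding X0_def
        proof (intro Collect_cong)
          fix p show "(p \<in> Pow {..<m} \<and> peval C1 p \<noteq> 0) = (p \<in> Pow {..<m} \<and> peval C0 p \<noteq> 0)"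
            using eqC[of p] by auto
        qed
        then show ?thesis by simp
      next
        case False2: False
        have eqC: "peval C01 p = peval C1 p" if "p \<subseteq> {..<m}" for p
          using False2 that e01 by simp
        have "{p \<in> Pow {..<m}. peval C1 p \<noteq> 0} = X1" unfolding X1_def
        proof (intro Collect_cong)
          fix p show "(p \<in> Pow {..<m} \<and> peval C1 p \<noteq> 0) = (p \<in> Pow {..<m} \<and> peval C01 p \<noteq> 0)"
            using eqC[of p] by auto
        qed
        then show ?thesis by simp
      qed
      moreover have "(2::nat) ^ (Suc m - d) = 2 ^ (m - (d - 1))" by (simp only: ex)
      ultimately show ?thesis using IH1 cardX by linarith
    qed
  qed
qed

lemma poly_zero:
  assumes "\<forall>p\<subseteq>{..<m}. peval C p = 0" and "\<forall>A. C A \<noteq> 0 \<longrightarrow> A \<subseteq> {..<m}"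
  shows "C A = 0"
proof (induction "card A" arbitrary: A rule: less_induct)
  case less
  show ?case
  proof (cases "A \<subseteq> {..<m}")
    case False then show ?thesis using assms(2) by blast
  next
    case True
    have fA: "finite A" using True by (rule finite_subset) simp
    have "peval C A = C A + (\<Sum>B\<in>Pow A - {A}. C B)"
      unfolding peval_def using fA by (simp add: sum.remove[of "Pow A" A])
    also have "(\<Sum>B\<in>Pow A - {A}. C B) = 0"
    proof (rule sum.neutral, rule ballI)
      fix B assume "B \<in> Pow A - {A}"
      then have "B \<subset> A" by blast
      then have "card B < card A" using psubset_card_mono fA by blast
      then show "C B = 0" using less by blast
    qed
    finally show ?thesis using assms(1) True by simp
  qed
qed

definition Pts :: "nat \<Rightarrow> nat set" where "Pts m = set_encode ` Pow {..<m}"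
definition MonS :: "nat \<Rightarrow> nat \<Rightarrow> nat set set" where "MonS m d = {A \<in> Pow {..<m}. card A \<le> d}"
definition Mons :: "nat \<Rightarrow> nat \<Rightarrow> nat set" where "Mons m d = set_encode ` MonS m d"
definition vv :: "nat \<Rightarrow> nat \<Rightarrow> nat \<Rightarrow> nat \<Rightarrow> bit" where
  "vv m d n i = (if i \<in> Mons m d \<and> set_decode i \<subseteq> set_decode n then 1 else 0)"
definition ip :: "nat set \<Rightarrow> (nat \<Rightarrow> bit) \<Rightarrow> (nat \<Rightarrow> bit) \<Rightarrow> bit" where
  "ip I c w = (\<Sum>i\<in>I. c i * w i)"
definition Cof :: "nat \<Rightarrow> nat \<Rightarrow> (nat \<Rightarrow> bit) \<Rightarrow> nat set \<Rightarrow> bit" where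
  "Cof m d c A = (if A \<in> MonS m d then c (set_encode A) else 0)"

lemma fin_lt: "A \<subseteq> {..<(m::nat)} \<Longrightarrow> finite A"
  using finite_subset[of A "{..<m}"] by simp

lemma enc_inj: "inj_on set_encode (Pow {..<m})"
  by (rule inj_on_subset[OF inj_on_set_encode]) (auto intro: fin_lt)

lemma dec_enc: "A \<subseteq> {..<m} \<Longrightarrow> set_decode (set_encode A) = A"
  using fin_lt set_encode_inverse by blast

lemma Pts_dec: "x \<in> Pts m \<Longrightarrow> set_decode x \<subseteq> {..<m}"
  unfolding Pts_def using dec_enc by auto

lemma Pts_enc: "A \<subseteq> {..<m} \<Longrightarrow> set_encode A \<in> Pts m"
  unfolding Pts_def by blast

lemma finite_Pts: "finite (Pts m)" unfolding Pts_def by simp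
lemma finite_MonS: "finite (MonS m d)" unfolding MonS_def by simp
lemma finite_Mons: "finite (Mons m d)" unfolding Mons_def using finite_MonS by simp

lemma vv_supp: "i \<notin> Mons m d \<Longrightarrow> vv m d n i = 0" unfolding vv_def by simp

lemma ip_ssum: "finite Z \<Longrightarrow> ip I c (ssum v Z) = (\<Sum>z\<in>Z. ip I c (v z))"
  unfolding ip_def ssum_def by (simp add: sum_distrib_left sum.swap[of _ I Z])

lemma ip_add: "ip I (\<lambda>i. c1 i + c2 i) w = ip I c1 w + ip I c2 w"
  unfolding ip_def by (simp add: distrib_right sum.distrib)

lemma ip_poly:
  assumes "n \<in> Pts m"
  shows "ip (Mons m d) c (vv m d n) = peval (Cof m d c) (set_decode n)"
proof -
  define p where "p = set_decode n"
  have injM: "inj_on set_encode (MonS m d)"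
    by (rule inj_on_subset[OF enc_inj]) (auto simp: MonS_def)
  have "ip (Mons m d) c (vv m d n) = (\<Sum>A\<in>MonS m d. c (set_encode A) * vv m d n (set_encode A))"
    unfolding ip_def Mons_def by (rule sum.reindex[OF injM, unfolded comp_def])
  also have "\<dots> = (\<Sum>A\<in>MonS m d. if A \<in> Pow p then c (set_encode A) else 0)"
  proof (rule sum.cong[OF refl])
    fix A assume A: "A \<in> MonS m d"
    have "set_encode A \<in> Mons m d" unfolding Mons_def using A by blast
    moreover have "set_decode (set_encode A) = A" using A dec_enc unfolding MonS_def by blast
    ultimately show "c (set_encode A) * vv m d n (set_encode A) = (if A \<in> Pow p then c (set_encode A) else 0)"
      unfolding vv_def p_def by simp
  qed
  also have "\<dots> = (\<Sum>A\<in>MonS m d \<inter> Pow p. c (set_encode A))"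
    by (rule sum.inter_restrict[OF finite_MonS, symmetric])
  also have "\<dots> = (\<Sum>A\<in>Pow p \<inter> MonS m d. c (set_encode A))" by (simp add: Int_commute)
  also have "\<dots> = (\<Sum>A\<in>Pow p. if A \<in> MonS m d then c (set_encode A) else 0)"
    by (rule sum.inter_restrict) (use Pts_dec[OF assms] fin_lt in \<open>simp add: p_def\<close>)
  also have "\<dots> = peval (Cof m d c) p" unfolding peval_def Cof_def by simp
  finally show ?thesis unfolding p_def .
qed

lemma Cof_supp: "Cof m d c A \<noteq> 0 \<Longrightarrow> A \<subseteq> {..<m} \<and> card A \<le> d"
  unfolding Cof_def MonS_def by (simp split: if_splits)

definition ind :: "'x set \<Rightarrow> 'x \<Rightarrow> bit" where "ind A = (\<lambda>z. if z \<in> A then 1 else 0)"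

lemma funs_eq: "{f :: 'x \<Rightarrow> bit. \<forall>z. z \<notin> I \<longrightarrow> f z = 0} = ind ` Pow I"
proof
  show "{f :: 'x \<Rightarrow> bit. \<forall>z. z \<notin> I \<longrightarrow> f z = 0} \<subseteq> ind ` Pow I"
  proof
    fix f :: "'x \<Rightarrow> bit" assume f: "f \<in> {f. \<forall>z. z \<notin> I \<longrightarrow> f z = 0}"
    define A where "A = {z \<in> I. f z = 1}"
    have "f = ind A"
    proof
      fix z show "f z = ind A z"
        unfolding ind_def A_def using f by (cases "f z = 1") auto
    qed
    moreover have "A \<in> Pow I" unfolding A_def by blast
    ultimately show "f \<in> ind ` Pow I" by blast
  qed
next
  show "ind ` Pow I \<subseteq> {f :: 'x \<Rightarrow> bit. \<forall>z. z \<notin> I \<longrightarrow> f z = 0}"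
    unfolding ind_def by auto
qed

lemma ind_inj: "inj ind"
proof (rule injI)
  fix A B :: "'x set" assume "ind A = ind B"
  then have "\<forall>z. (z \<in> A) = (z \<in> B)" unfolding ind_def by (metis one_neq_zero)
  then show "A = B" by blast
qed

lemma card_funs: "finite I \<Longrightarrow> card {f :: 'x \<Rightarrow> bit. \<forall>z. z \<notin> I \<longrightarrow> f z = 0} = 2 ^ card I"
  unfolding funs_eq using card_image[OF inj_on_subset[OF ind_inj subset_UNIV]] card_Pow by metis

lemma finite_funs: "finite I \<Longrightarrow> finite {f :: 'x \<Rightarrow> bit. \<forall>z. z \<notin> I \<longrightarrow> f z = 0}"
  unfolding funs_eq by simp

lemma supp_bound:
  assumes "finite I" "finite Y" "gf2_indep v Y" "\<forall>y\<in>Y. \<forall>i. i \<notin> I \<longrightarrow> v y i = 0"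
  shows "card Y \<le> card I"
proof -
  have inj: "inj_on (ssum v) (Pow Y)"
    using indep_sum_inj[OF assms(2,3)] by (auto simp: inj_on_def)
  have sub: "ssum v ` Pow Y \<subseteq> {f. \<forall>z. z \<notin> I \<longrightarrow> f z = 0}"
  proof
    fix w assume "w \<in> ssum v ` Pow Y"
    then obtain Z where Z: "Z \<subseteq> Y" "w = ssum v Z" by blast
    show "w \<in> {f. \<forall>z. z \<notin> I \<longrightarrow> f z = 0}"
      unfolding Z(2) ssum_def using Z(1) assms(4) by (auto intro!: sum.neutral)
  qed
  have "card (Pow Y) \<le> card {f :: nat \<Rightarrow> bit. \<forall>z. z \<notin> I \<longrightarrow> f z = 0}"
    by (rule card_inj_on_le[OF inj sub finite_funs[OF assms(1)]])
  then have "(2::nat) ^ card Y \<le> 2 ^ card I" using card_funs[OF assms(1)] card_Pow[OF assms(2)] by metis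
  then show ?thesis by simp
qed

lemma model_DP:
  assumes TS: "T \<subseteq> Pts m" and indT: "gf2_indep (vv m d) T"
    and span: "\<forall>x\<in>Pts m. \<exists>Z\<subseteq>T. ssum (vv m d) Z = vv m d x" and tT: "t \<in> T"
  shows "2 ^ (m - d) \<le> card {x \<in> Pts m. \<exists>Z\<subseteq>T. t \<in> Z \<and> ssum (vv m d) Z = vv m d x}"
proof -
  define v where "v = vv m d"
  define I where "I = Mons m d"
  have finI: "finite I" unfolding I_def by (rule finite_Mons)
  have finT: "finite T" using finite_subset[OF TS finite_Pts] .
  have cT: "card T \<le> card I"
    by (rule supp_bound[OF finI finT indT]) (simp add: vv_supp I_def)
  have "card T > 0" using tT finT card_gt_0_iff by blast
  then have cT1: "card (T - {t}) < card I" using cT card_Diff_singleton[OF tT] by linarith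
  define W where "W = {c :: nat \<Rightarrow> bit. \<forall>i. i \<notin> I \<longrightarrow> c i = 0}"
  define W' where "W' = {f :: nat \<Rightarrow> bit. \<forall>z. z \<notin> T - {t} \<longrightarrow> f z = 0}"
  define L where "L = (\<lambda>c z. if z \<in> T - {t} then ip I c (v z) else 0)"
  have LW: "L ` W \<subseteq> W'" unfolding L_def W'_def by auto
  have finT': "finite (T - {t})" using finT by simp
  have "card W' < card W"
    unfolding W_def W'_def card_funs[OF finI] card_funs[OF finT'] using cT1 by simp
  moreover have "inj_on L W \<Longrightarrow> card W \<le> card W'"
    using card_inj_on_le[OF _ LW finite_funs[OF finT', folded W'_def]] .
  ultimately have "\<not> inj_on L W" by linarith
  then obtain c1 c2 where c12: "c1 \<in> W" "c2 \<in> W" "c1 \<noteq> c2" "L c1 = L c2"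
    unfolding inj_on_def by blast
  define c where "c = (\<lambda>i. c1 i + c2 i)"
  have cW: "c i = 0" if "i \<notin> I" for i using c12(1,2) that unfolding W_def c_def by simp
  obtain i0 where i0: "c1 i0 \<noteq> c2 i0" using c12(3) by blast
  have i0I: "i0 \<in> I"
  proof (rule ccontr)
    assume "i0 \<notin> I"
    then have "c1 i0 = 0" "c2 i0 = 0" using c12(1,2) unfolding W_def by blast+
    then show False using i0 by simp
  qed
  have ci0: "c i0 \<noteq> 0" unfolding c_def using i0 bit_eq_iff_sum0 by metis
  have perp: "ip I c (v z) = 0" if z: "z \<in> T - {t}" for z
  proof -
    have "L c1 z = L c2 z" using c12(4) by simp
    then have "ip I c1 (v z) = ip I c2 (v z)" unfolding L_def using z by simp
    then show ?thesis unfolding c_def ip_add by simp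
  qed
  have ipx: "ip I c (v x) = (\<Sum>z\<in>Z. ip I c (v z))" if "Z \<subseteq> T" "ssum v Z = v x" for x Z
  proof -
    have "finite Z" using finite_subset[OF that(1) finT] .
    then show ?thesis using ip_ssum[of Z I c v] that(2) by simp
  qed
  have ct: "ip I c (v t) = 1"
  proof (rule ccontr)
    assume "ip I c (v t) \<noteq> 1"
    then have ct0: "ip I c (v t) = 0" by simp
    have allT: "ip I c (v z) = 0" if "z \<in> T" for z using perp ct0 that by (cases "z = t") auto
    have allP: "peval (Cof m d c) p = 0" if p: "p \<subseteq> {..<m}" for p
    proof -
      have xP: "set_encode p \<in> Pts m" using p by (rule Pts_enc)
      obtain Z where Z: "Z \<subseteq> T" "ssum v Z = v (set_encode p)" using span xP unfolding v_def by blast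
      have "ip I c (v (set_encode p)) = 0" using ipx[OF Z] allT Z(1) by (simp add: subset_iff)
      then show ?thesis using ip_poly[OF xP, of d c] dec_enc[OF p] unfolding I_def v_def by simp
    qed
    have "Cof m d c A = 0" for A
      by (rule poly_zero[of m]) (use allP Cof_supp in blast)+
    moreover obtain A where "A \<in> MonS m d" "i0 = set_encode A" using i0I unfolding I_def Mons_def by blast
    ultimately have "c i0 = 0" unfolding Cof_def by metis
    then show False using ci0 by simp
  qed
  define D where "D = {x \<in> Pts m. \<exists>Z\<subseteq>T. t \<in> Z \<and> ssum (vv m d) Z = vv m d x}"
  define E where "E = {p \<in> Pow {..<m}. peval (Cof m d c) p \<noteq> 0}"
  have ED: "set_encode ` E \<subseteq> D"
  proof
    fix x assume "x \<in> set_encode ` E"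
    then obtain p where p: "p \<subseteq> {..<m}" "peval (Cof m d c) p \<noteq> 0" "x = set_encode p"
      unfolding E_def by blast
    have xP: "x \<in> Pts m" using p(1,3) Pts_enc by simp
    have "ip I c (v x) \<noteq> 0" using ip_poly[OF xP, of d c] p dec_enc[OF p(1)] unfolding I_def v_def by simp
    moreover obtain Z where Z: "Z \<subseteq> T" "ssum v Z = v x" using span xP unfolding v_def by blast
    ultimately have "(\<Sum>z\<in>Z. ip I c (v z)) \<noteq> 0" using ipx by metis
    then have "t \<in> Z"
    proof (rule contrapos_np)
      assume "t \<notin> Z"
      then show "(\<Sum>z\<in>Z. ip I c (v z)) = 0" using perp Z(1) by (intro sum.neutral) blast
    qed
    then show "x \<in> D" unfolding D_def using xP Z unfolding v_def by blast
  qed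
  have "2 ^ (m - d) \<le> card E"
    unfolding E_def
  proof (rule poly_count[THEN spec, THEN spec, THEN mp, THEN mp])
    show "\<forall>A. Cof m d c A \<noteq> 0 \<longrightarrow> A \<subseteq> {..<m} \<and> card A \<le> d" using Cof_supp by blast
    have tP: "t \<in> Pts m" using tT TS by blast
    have "peval (Cof m d c) (set_decode t) = 1" using ct ip_poly[OF tP, of d c] unfolding I_def v_def by simp
    then show "\<exists>p\<subseteq>{..<m}. peval (Cof m d c) p \<noteq> 0" using Pts_dec[OF tP] by auto
  qed
  also have "card E = card (set_encode ` E)"
    by (rule card_image[symmetric], rule inj_on_subset[OF enc_inj]) (auto simp: E_def)
  also have "\<dots> \<le> card D"
    by (rule card_mono) (use ED finite_Pts in \<open>auto simp: D_def\<close>)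
  finally show ?thesis unfolding D_def .
qed

lemma sum_if_one: "finite A \<Longrightarrow> (\<Sum>x\<in>A. if P x then (1::bit) else 0) = of_nat (card {x\<in>A. P x})"
  using sum_if_const[of A P 1] by simp

lemma low_indep: "gf2_indep (vv m d) (set_encode ` {p \<in> Pow {..<m}. card p \<le> d})"
proof (rule gf2_indepI)
  fix Y assume Y: "Y \<subseteq> set_encode ` {p \<in> Pow {..<m}. card p \<le> d}" "Y \<noteq> {}"
  have "finite {p \<in> Pow {..<m}. card p \<le> d}" by (rule finite_subset[of _ "Pow {..<m}"]) auto
  then have finY: "finite Y" using finite_subset[OF Y(1)] finite_imageI by blast
  have Yel: "set_decode y \<subseteq> {..<m} \<and> card (set_decode y) \<le> d" if "y \<in> Y" for y
  proof -
    have "y \<in> set_encode ` {p \<in> Pow {..<m}. card p \<le> d}" using Y(1) that by (rule subsetD)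
    then obtain p where p: "p \<in> {p \<in> Pow {..<m}. card p \<le> d}" "y = set_encode p" by (rule imageE)
    then have "p \<subseteq> {..<m}" "card p \<le> d" by auto
    then show ?thesis using dec_enc[of p m] p(2) by simp
  qed
  obtain y00 where "y00 \<in> Y" using Y(2) by blast
  from ex_has_least_nat[where P="\<lambda>y. y \<in> Y" and m="\<lambda>y. d - card (set_decode y)", OF this]
  obtain y0 where y0: "y0 \<in> Y" and mn: "\<forall>y. y \<in> Y \<longrightarrow> d - card (set_decode y0) \<le> d - card (set_decode y)"
    by (elim exE conjE) (rule that)
  define p0 where "p0 = set_decode y0"
  have mx: "card (set_decode y) \<le> card p0" if "y \<in> Y" for y
    using mn[rule_format, OF that] Yel[OF that, THEN conjunct2] Yel[OF y0, THEN conjunct2]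
    unfolding p0_def by linarith
  have p0: "p0 \<subseteq> {..<m}" "card p0 \<le> d" using Yel[OF y0] unfolding p0_def by auto
  have y0e: "y0 = set_encode p0" unfolding p0_def by simp
  have y0M: "y0 \<in> Mons m d" unfolding Mons_def MonS_def y0e using p0 by blast
  have vy: "vv m d y y0 = (if p0 \<subseteq> set_decode y then 1 else 0)" for y
    unfolding vv_def p0_def using y0M p0_def by simp
  have single: "{y \<in> Y. p0 \<subseteq> set_decode y} = {y0}"
  proof
    show "{y \<in> Y. p0 \<subseteq> set_decode y} \<subseteq> {y0}"
    proof
      fix y assume y: "y \<in> {y \<in> Y. p0 \<subseteq> set_decode y}"
      then have yy1: "y \<in> Y" "p0 \<subseteq> set_decode y" by auto
      have yy3: "finite (set_decode y)" by simp
      note yy = yy1 yy3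
      have c1: "card p0 \<le> card (set_decode y)" using card_mono[OF yy(3) yy(2)] .
      have c2: "card (set_decode y) \<le> card p0" using mx[OF yy(1)] .
      have "p0 = set_decode y" using card_subset_eq[OF yy(3) yy(2)] c1 c2 by linarith
      then have "set_encode (set_decode y) = y0" using y0e by simp
      then show "y \<in> {y0}" by simp
    qed
  next
    show "{y0} \<subseteq> {y \<in> Y. p0 \<subseteq> set_decode y}" using y0 unfolding p0_def by simp
  qed
  have "ssum (vv m d) Y y0 = 1"
    unfolding ssum_def vy using sum_if_one[OF finY, of "\<lambda>y. p0 \<subseteq> set_decode y"] single by simp
  then show "ssum (vv m d) Y \<noteq> (\<lambda>i. 0)" by (metis one_neq_zero)
qed

lemma high_indep:
  assumes md: "m \<le> 2 * d + 1"
  shows "gf2_indep (vv m d) (set_encode ` {p \<in> Pow {..<m}. d < card p})"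
proof (rule gf2_indepI)
  fix Y assume Y: "Y \<subseteq> set_encode ` {p \<in> Pow {..<m}. d < card p}" "Y \<noteq> {}"
  have "finite {p \<in> Pow {..<m}. d < card p}" by (rule finite_subset[of _ "Pow {..<m}"]) auto
  then have finY: "finite Y" using finite_subset[OF Y(1)] finite_imageI by blast
  have Yel: "set_decode y \<subseteq> {..<m} \<and> d < card (set_decode y)" if "y \<in> Y" for y
  proof -
    have "y \<in> set_encode ` {p \<in> Pow {..<m}. d < card p}" using Y(1) that by (rule subsetD)
    then obtain p where p: "p \<in> {p \<in> Pow {..<m}. d < card p}" "y = set_encode p" by (rule imageE)
    then have "p \<subseteq> {..<m}" "d < card p" by auto
    then show ?thesis using dec_enc[of p m] p(2) by simp
  qed
  obtain y00 where "y00 \<in> Y" using Y(2) by blast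
  from ex_has_least_nat[where P="\<lambda>y. y \<in> Y" and m="\<lambda>y. card (set_decode y)", OF this]
  obtain y0 where y0: "y0 \<in> Y" and mn: "\<forall>y. y \<in> Y \<longrightarrow> card (set_decode y0) \<le> card (set_decode y)"
    by (elim exE conjE) (rule that)
  define p0 where "p0 = set_decode y0"
  define q where "q = {..<m} - p0"
  have p0: "p0 \<subseteq> {..<m}" "d < card p0" using Yel[OF y0] unfolding p0_def by auto
  have cq: "card q = m - card p0" unfolding q_def using card_Diff_subset[OF fin_lt[OF p0(1)] p0(1)] by simp
  then have cqd: "card q \<le> d" using p0(2) md by linarith
  have finq: "finite q" unfolding q_def by simp
  have qm: "q \<subseteq> {..<m}" unfolding q_def by blast
  have vB: "vv m d y (set_encode B) = (if B \<subseteq> set_decode y then 1 else 0)" if B: "B \<subseteq> q" for B y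
  proof -
    have Bm: "B \<subseteq> {..<m}" using B qm by blast
    have "card B \<le> card q" using B finq by (rule card_mono[rotated])
    then have "B \<in> MonS m d" unfolding MonS_def using Bm cqd by simp
    then have "set_encode B \<in> Mons m d" unfolding Mons_def by blast
    then show ?thesis unfolding vv_def using dec_enc[OF Bm] by simp
  qed
  have inner: "(\<Sum>B\<in>Pow q. vv m d y (set_encode B)) = of_nat (2 ^ card (q \<inter> set_decode y))" for y
  proof -
    have "(\<Sum>B\<in>Pow q. vv m d y (set_encode B)) = (\<Sum>B\<in>Pow q. if B \<subseteq> set_decode y then 1 else 0)"
      by (rule sum.cong[OF refl]) (simp add: vB)
    also have "\<dots> = of_nat (card {B \<in> Pow q. B \<subseteq> set_decode y})" using finq by (simp add: sum_if_one)
    also have "{B \<in> Pow q. B \<subseteq> set_decode y} = Pow (q \<inter> set_decode y)" by blast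
    also have "card (Pow (q \<inter> set_decode y)) = 2 ^ card (q \<inter> set_decode y)"
      by (rule card_Pow) (simp add: finq)
    finally show ?thesis .
  qed
  have f0: "of_nat (2 ^ card (q \<inter> set_decode y)) = (0::bit)" if y: "y \<in> Y" "y \<noteq> y0" for y
  proof -
    have "q \<inter> set_decode y \<noteq> {}"
    proof
      assume e: "q \<inter> set_decode y = {}"
      have "set_decode y \<subseteq> p0" using e Yel[OF y(1)] unfolding q_def by blast
      moreover have "card p0 \<le> card (set_decode y)" using mn y(1) unfolding p0_def by blast
      moreover have "card (set_decode y) \<le> card p0" using card_mono[OF fin_lt[OF p0(1)] calculation(1)] .
      ultimately have "set_decode y = p0" using card_subset_eq[OF fin_lt[OF p0(1)]] by (metis le_antisym)
      then have "set_encode (set_decode y) = set_encode (set_decode y0)" unfolding p0_def by simp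
      then show False using y(2) by simp
    qed
    then have "card (q \<inter> set_decode y) \<noteq> 0" using finq by simp
    then show ?thesis by (simp add: of_nat_bit)
  qed
  have f1: "of_nat (2 ^ card (q \<inter> set_decode y0)) = (1::bit)"
  proof -
    have "q \<inter> set_decode y0 = {}" unfolding q_def p0_def by blast
    then show ?thesis by simp
  qed
  show "ssum (vv m d) Y \<noteq> (\<lambda>i. 0)"
  proof
    assume z: "ssum (vv m d) Y = (\<lambda>i. 0)"
    have "0 = (\<Sum>B\<in>Pow q. ssum (vv m d) Y (set_encode B))" using z by simp
    also have "\<dots> = (\<Sum>y\<in>Y. \<Sum>B\<in>Pow q. vv m d y (set_encode B))"
      unfolding ssum_def by (rule sum.swap)
    also have "\<dots> = (\<Sum>y\<in>Y. of_nat (2 ^ card (q \<inter> set_decode y)))" by (simp add: inner)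
    also have "\<dots> = of_nat (2 ^ card (q \<inter> set_decode y0)) + (\<Sum>y\<in>Y - {y0}. of_nat (2 ^ card (q \<inter> set_decode y)))"
      by (rule sum.remove[OF finY y0])
    also have "(\<Sum>y\<in>Y - {y0}. (of_nat (2 ^ card (q \<inter> set_decode y)) :: bit)) = 0"
      by (rule sum.neutral) (use f0 in blast)
    finally show False using f1 by simp
  qed
qed

theorem theorem6:
  fixes g :: nat
  assumes "g > 0"
  shows "\<exists>(S :: nat set) indep.
           matroid S indep \<and> binary S indep \<and> loopless S indep \<and> coverable 2 S indep \<and>
           (\<forall>P. partition_on S P \<longrightarrow> rank_preserving S indep P \<longrightarrow>
                rainbow_circuit_free S indep P \<longrightarrow> (\<exists>B\<in>P. card B \<ge> g))"
proof -
  define d where "d = g"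
  define m where "m = 2 * g + 1"
  define S where "S = Pts m"
  define v where "v = vv m d"
  define indep where "indep = (\<lambda>X. X \<subseteq> S \<and> gf2_indep v X)"
  have finS: "finite S" unfolding S_def by (rule finite_Pts)
  have Sne: "S \<noteq> {}" unfolding S_def Pts_def by blast
  have mat: "matroid S indep" unfolding indep_def by (rule matroid_gf2[OF finS])
  have bin: "binary S indep" unfolding binary_def indep_def by (rule exI[of _ v]) blast
  have ll: "loopless S indep" unfolding loopless_def indep_def
  proof (rule ballI)
    fix e assume e: "e \<in> S"
    have "gf2_indep v {e}"
    proof (rule gf2_indepI)
      fix Y assume Y: "Y \<subseteq> {e}" "Y \<noteq> {}"
      then have Ye: "Y = {e}" by blast
      have "(0::nat) \<in> Mons m d" unfolding Mons_def MonS_def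
        by (rule image_eqI[of _ _ "{}"]) auto
      then have "v e 0 = 1" unfolding v_def vv_def by simp
      then show "ssum v Y \<noteq> (\<lambda>i. 0)" unfolding Ye ssum_single by (metis one_neq_zero)
    qed
    then show "{e} \<subseteq> S \<and> gf2_indep v {e}" using e by blast
  qed
  define Slow where "Slow = set_encode ` {p \<in> Pow {..<m}. card p \<le> d}"
  define Shigh where "Shigh = set_encode ` {p \<in> Pow {..<m}. d < card p}"
  have cov: "coverable 2 S indep" unfolding coverable_def
  proof (rule exI[of _ "{Slow, Shigh}"], intro conjI)
    show "finite {Slow, Shigh}" by simp
    show "card {Slow, Shigh} \<le> 2" by (simp add: card_insert_if)
    have "Slow \<subseteq> S" unfolding Slow_def S_def Pts_def by blast
    moreover have "Shigh \<subseteq> S" unfolding Shigh_def S_def Pts_def by blast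
    moreover have "gf2_indep v Slow" unfolding Slow_def v_def by (rule low_indep)
    moreover have "gf2_indep v Shigh" unfolding Shigh_def v_def by (rule high_indep) (simp add: m_def d_def)
    ultimately show "\<forall>I\<in>{Slow, Shigh}. indep I" unfolding indep_def by blast
    show "S \<subseteq> \<Union> {Slow, Shigh}"
    proof
      fix x assume "x \<in> S"
      then obtain p where p: "p \<in> Pow {..<m}" "x = set_encode p" unfolding S_def Pts_def by blast
      show "x \<in> \<Union> {Slow, Shigh}"
      proof (cases "card p \<le> d")
        case True
        then have "x \<in> Slow" unfolding Slow_def using p by blast
        then show ?thesis by blast
      next
        case False
        then have "x \<in> Shigh" unfolding Shigh_def using p by (simp add: not_le)
        then show ?thesis by blast
      qed
    qed
  qed
  have main: "\<exists>B\<in>P. card B \<ge> g"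
    if P: "partition_on S P" "rank_preserving S indep P" "rainbow_circuit_free S indep P" for P
  proof -
    have DP: "2 ^ (m - d) \<le> card {x\<in>S. \<exists>Z\<subseteq>T. t \<in> Z \<and> ssum v Z = v x}"
      if "T \<subseteq> S" "gf2_indep v T" "\<forall>x\<in>S. \<exists>Z\<subseteq>T. ssum v Z = v x" "t \<in> T" for T t
      using model_DP[of T m d t] that unfolding S_def v_def by blast
    have rk: "card P = mrank S (\<lambda>X. X \<subseteq> S \<and> gf2_indep v X)"
      using P(2) unfolding rank_preserving_def indep_def .
    have rcf: "rainbow_circuit_free S (\<lambda>X. X \<subseteq> S \<and> gf2_indep v X) P"
      using P(3) unfolding indep_def .
    obtain B where B: "B \<in> P" "2 ^ (m - d) \<le> card B"
      using main_lemma[OF finS Sne DP P(1) rk rcf] by blast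
    have "m - d = Suc g" unfolding m_def d_def by simp
    then have "g < 2 ^ (m - d)" using less_exp[of "Suc g"] by simp
    then show ?thesis using B by force
  qed
  show ?thesis
    apply (rule exI[of _ S], rule exI[of _ indep])
    using mat bin ll cov main by blast
qed

end
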